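(* The $\mathbf{T}_0$-fixed locus of $\mathcal{Q}_0(r,n)$ coincides with its $\mathbf{T}$-fixed locus: $\mathcal{Q}_0(r,n)^{\mathbf T_0}=\mathcal{Q}_0(r,n)^{\mathbf T}$.
   Context: Let $V_\infty=\mathbb{C}^r$ with basis $e_a$, and let $A_re_a=e_{a+1}$, $e_{r+1}=0$. $\mathcal{Q}(r,n)$ is the moduli space, up to $GL(V)$, of framed cyclic representations $(V,B_1,B_2,B_3,I,J)$. These satisfy: - $\dim V=n$; - $[B_1,B_2]+IJ=0$, $JB_3=A_rJ$, $B_3I=IA_r$, $[B_3,B_1]=[B_3,B_2]=0$; - no proper nonzero $B_1,B_2,B_3$-invariant subspace contains $\mathrm{Im}\,I$. $\mathcal{Q}_0(r,n)\subset\mathcal{Q}(r,n)$ is the closed subscheme where $J=0$. With $I_a=I(e_a)$ and $J_a$ the components of $J$, the torus $\mathbf{T}=(\mathbb{C}^\times)^3$ acts by $$(t_1,t_2,t_3)\cdot(B_i,I_a,J_a)=(t_iB_i,\ t_3^{a-1}I_a,\ t_1t_2t_3^{1-a}J_a).$$ $\mathbf{T}_0\subset\mathbf{T}$ is the subtorus $t_1t_2t_3=1$, i.e. the image of $(t_1,t_2)\mapsto(t_1,t_2,t_1^{-1}t_2^{-1})$. *)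

theory Defs
  imports "Jordan_Normal_Form.Matrix"
begin

text \<open>Data of a framed representation on V = C^n with framing C^r:
  (B1, B2, B3, I, J), with B_i n x n, I : C^r -> V an n x r matrix,
  J : V -> C^r an r x n matrix. Indices are 0-based: column a of I is I_(a+1).\<close>

type_synonym rep_data = "complex mat \<times> complex mat \<times> complex mat \<times> complex mat \<times> complex mat"

text \<open>A_r e_a = e_(a+1), e_(r+1) = 0 (0-based: entry (i,j) = 1 iff i = j+1).\<close>
definition A_mat :: "nat \<Rightarrow> complex mat" where
  "A_mat r = mat r r (\<lambda>(i,j). if i = Suc j then 1 else 0)"

definition is_subspace :: "nat \<Rightarrow> complex vec set \<Rightarrow> bool" where
  "is_subspace n W \<longleftrightarrow> W \<subseteq> carrier_vec n \<and> 0\<^sub>v n \<in> W \<and>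
     (\<forall>v\<in>W. \<forall>w\<in>W. v + w \<in> W) \<and> (\<forall>c. \<forall>v\<in>W. c \<cdot>\<^sub>v v \<in> W)"

definition cyclic_cond :: "nat \<Rightarrow> nat \<Rightarrow> rep_data \<Rightarrow> bool" where
  "cyclic_cond r n x = (case x of (B1, B2, B3, I, J) \<Rightarrow>
     (\<forall>W. is_subspace n W
        \<and> (\<forall>w\<in>W. B1 *\<^sub>v w \<in> W \<and> B2 *\<^sub>v w \<in> W \<and> B3 *\<^sub>v w \<in> W)
        \<and> (\<forall>u\<in>carrier_vec r. I *\<^sub>v u \<in> W)
        \<longrightarrow> W = carrier_vec n))"

definition is_rep :: "nat \<Rightarrow> nat \<Rightarrow> rep_data \<Rightarrow> bool" where
  "is_rep r n x = (case x of (B1, B2, B3, I, J) \<Rightarrow>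
     B1 \<in> carrier_mat n n \<and> B2 \<in> carrier_mat n n \<and> B3 \<in> carrier_mat n n \<and>
     I \<in> carrier_mat n r \<and> J \<in> carrier_mat r n \<and>
     B1 * B2 - B2 * B1 + I * J = 0\<^sub>m n n \<and>
     J * B3 = A_mat r * J \<and>
     B3 * I = I * A_mat r \<and>
     B3 * B1 = B1 * B3 \<and> B3 * B2 = B2 * B3)"

definition in_Q0 :: "nat \<Rightarrow> nat \<Rightarrow> rep_data \<Rightarrow> bool" where
  "in_Q0 r n x \<longleftrightarrow> is_rep r n x \<and> cyclic_cond r n x \<and> snd (snd (snd (snd x))) = 0\<^sub>m r n"

text \<open>Torus action: (t1,t2,t3).(B_i, I_a, J_a) = (t_i B_i, t3^(a-1) I_a, t1 t2 t3^(1-a) J_a),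
  with a 1-based; here a' = a - 1 is 0-based.\<close>
definition torus_act :: "nat \<Rightarrow> nat \<Rightarrow> complex \<Rightarrow> complex \<Rightarrow> complex \<Rightarrow> rep_data \<Rightarrow> rep_data" where
  "torus_act r n t1 t2 t3 x = (case x of (B1, B2, B3, I, J) \<Rightarrow>
     (t1 \<cdot>\<^sub>m B1, t2 \<cdot>\<^sub>m B2, t3 \<cdot>\<^sub>m B3,
      mat n r (\<lambda>(i,a). t3 ^ a * I $$ (i,a)),
      mat r n (\<lambda>(a,j). t1 * t2 / t3 ^ a * J $$ (a,j))))"

text \<open>GL(V) action g.(B,I,J) = (g B g^-1, g I, J g^-1), h = g^-1.\<close>
definition gl_act :: "complex mat \<Rightarrow> complex mat \<Rightarrow> rep_data \<Rightarrow> rep_data" where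
  "gl_act g h x = (case x of (B1, B2, B3, I, J) \<Rightarrow>
     (g * B1 * h, g * B2 * h, g * B3 * h, g * I, J * h))"

definition gl_equiv :: "nat \<Rightarrow> rep_data \<Rightarrow> rep_data \<Rightarrow> bool" where
  "gl_equiv n x y \<longleftrightarrow> (\<exists>g h. g \<in> carrier_mat n n \<and> h \<in> carrier_mat n n \<and>
      g * h = 1\<^sub>m n \<and> h * g = 1\<^sub>m n \<and> gl_act g h x = y)"

definition fixed_by :: "nat \<Rightarrow> nat \<Rightarrow> complex \<Rightarrow> complex \<Rightarrow> complex \<Rightarrow> rep_data \<Rightarrow> bool" where
  "fixed_by r n t1 t2 t3 x \<longleftrightarrow> gl_equiv n (torus_act r n t1 t2 t3 x) x"

definition T_fixed :: "nat \<Rightarrow> nat \<Rightarrow> rep_data \<Rightarrow> bool" where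
  "T_fixed r n x \<longleftrightarrow> (\<forall>t1 t2 t3. t1 \<noteq> 0 \<and> t2 \<noteq> 0 \<and> t3 \<noteq> 0 \<longrightarrow> fixed_by r n t1 t2 t3 x)"

definition T0_fixed :: "nat \<Rightarrow> nat \<Rightarrow> rep_data \<Rightarrow> bool" where
  "T0_fixed r n x \<longleftrightarrow> (\<forall>t1 t2. t1 \<noteq> 0 \<and> t2 \<noteq> 0 \<longrightarrow> fixed_by r n t1 t2 (1 / (t1 * t2)) x)"

end

theory Submission
  imports Defs "Jordan_Normal_Form.Determinant"
begin


lemma mat_vec_sum:
  fixes A :: "complex mat"
  assumes A: "A \<in> carrier_mat n n" and y: "\<forall>k\<in>S. y k \<in> carrier_vec n" and i: "i < n"
  shows "(\<Sum>k\<in>S. c k * (A *\<^sub>v y k) $ i) = (\<Sum>j<n. A $$ (i,j) * (\<Sum>k\<in>S. c k * y k $ j))"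
proof -
  have "(\<Sum>k\<in>S. c k * (A *\<^sub>v y k) $ i) = (\<Sum>k\<in>S. \<Sum>j<n. c k * (A $$ (i,j) * y k $ j))"
    using A y i by (intro sum.cong) (auto simp: scalar_prod_def sum_distrib_left lessThan_atLeast0)
  also have "\<dots> = (\<Sum>j<n. \<Sum>k\<in>S. c k * (A $$ (i,j) * y k $ j))" by (rule sum.swap)
  also have "\<dots> = (\<Sum>j<n. A $$ (i,j) * (\<Sum>k\<in>S. c k * y k $ j))"
    by (simp add: sum_distrib_left mult.assoc mult.left_commute)
  finally show ?thesis .
qed

lemma mat_eq_vec:
  fixes A B :: "complex mat"
  assumes A: "A \<in> carrier_mat n n" and B: "B \<in> carrier_mat n n"
  and eq: "\<And>x. x \<in> carrier_vec n \<Longrightarrow> A *\<^sub>v x = B *\<^sub>v x"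
  shows "A = B"
proof (rule eq_matI)
  fix i j assume i: "i < dim_row B" and j: "j < dim_col B"
  have "A $$ (i,j) = (A *\<^sub>v unit_vec n j) $ i" using A B i j by simp
  also have "\<dots> = (B *\<^sub>v unit_vec n j) $ i" using eq[of "unit_vec n j"] by simp
  also have "\<dots> = B $$ (i,j)" using A B i j by simp
  finally show "A $$ (i,j) = B $$ (i,j)" .
qed (use A B in auto)

lemma dependence:
  fixes f :: "nat \<Rightarrow> complex vec"
  assumes f: "\<And>k. k \<le> n \<Longrightarrow> f k \<in> carrier_vec n"
  shows "\<exists>c. (\<exists>k\<le>n. c k \<noteq> 0) \<and> (\<forall>i<n. (\<Sum>k\<le>n. c k * f k $ i) = 0)"
proof -
  define M :: "complex mat" where "M = mat\<^sub>r (Suc n) (Suc n) (\<lambda>i. if i = n then 0\<^sub>v (Suc n) else vec (Suc n) (\<lambda>k. f k $ i))"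
  have M: "M \<in> carrier_mat (Suc n) (Suc n)" unfolding M_def by simp
  have "det M = 0" unfolding M_def by (rule det_row_0) auto
  then obtain w where w: "w \<in> carrier_vec (Suc n)" "w \<noteq> 0\<^sub>v (Suc n)" "M *\<^sub>v w = 0\<^sub>v (Suc n)"
    using det_0_iff_vec_prod_zero[OF M] by blast
  have "\<exists>k\<le>n. w $ k \<noteq> 0"
  proof (rule ccontr)
    assume "\<not> ?thesis"
    hence "w = 0\<^sub>v (Suc n)" using w(1) by (intro eq_vecI) auto
    thus False using w(2) by simp
  qed
  moreover have "\<forall>i<n. (\<Sum>k\<le>n. w $ k * f k $ i) = 0"
  proof (intro allI impI)
    fix i assume i: "i < n"
    have "(M *\<^sub>v w) $ i = 0" using w(3) i by simp
    moreover have "(M *\<^sub>v w) $ i = (\<Sum>k<Suc n. f k $ i * w $ k)"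
      using i w(1) unfolding M_def by (simp add: scalar_prod_def lessThan_atLeast0)
    ultimately show "(\<Sum>k\<le>n. w $ k * f k $ i) = 0"
      by (simp add: lessThan_Suc_atMost mult.commute)
  qed
  ultimately show ?thesis by blast
qed



lemma rel_apply:
  fixes A :: "complex mat"
  assumes A: "A \<in> carrier_mat n n" and y: "\<forall>k\<in>S. y k \<in> carrier_vec n"
  and rel: "\<forall>i<n. (\<Sum>k\<in>S. c k * y k $ i) = 0"
  shows "\<forall>i<n. (\<Sum>k\<in>S. c k * (A *\<^sub>v y k) $ i) = 0"
  using mat_vec_sum[OF A y] rel by simp

lemma eigen_split:
  fixes g :: "complex mat" and y :: "'k \<Rightarrow> complex vec" and lam :: "'k \<Rightarrow> complex"
  assumes g: "g \<in> carrier_mat n n" and fin: "finite S"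
  and y: "\<forall>k\<in>S. y k \<in> carrier_vec n" and ev: "\<forall>k\<in>S. g *\<^sub>v y k = lam k \<cdot>\<^sub>v y k"
  shows "(\<forall>i<n. (\<Sum>k\<in>S. c k * y k $ i) = 0) \<Longrightarrow>
     \<forall>i<n. (\<Sum>k\<in>S. (if lam k = \<mu> then c k else 0) * y k $ i) = 0"
proof (induction "card (lam ` {k\<in>S. c k \<noteq> 0})" arbitrary: c \<mu> rule: less_induct)
  case less
  let ?L = "lam ` {k\<in>S. c k \<noteq> 0}"
  have finL: "finite ?L" using fin by simp
  have scale: "\<forall>i<n. (\<Sum>k\<in>S. (c k * (lam k - a)) * y k $ i) = 0" for a
  proof (intro allI impI)
    fix i assume i: "i < n"
    have "(\<Sum>k\<in>S. c k * (g *\<^sub>v y k) $ i) = 0" using rel_apply[OF g y less.prems] i by blast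
    moreover have "(\<Sum>k\<in>S. c k * (g *\<^sub>v y k) $ i) = (\<Sum>k\<in>S. c k * lam k * y k $ i)"
      using ev y i by (intro sum.cong) auto
    ultimately have e1: "(\<Sum>k\<in>S. c k * lam k * y k $ i) = 0" by simp
    have "(\<Sum>k\<in>S. (c k * (lam k - a)) * y k $ i) =
          (\<Sum>k\<in>S. c k * lam k * y k $ i) - a * (\<Sum>k\<in>S. c k * y k $ i)"
      by (simp add: sum_distrib_left sum_subtractf algebra_simps)
    thus "(\<Sum>k\<in>S. (c k * (lam k - a)) * y k $ i) = 0" using e1 less.prems i by simp
  qed
  show ?case
  proof (cases "card ?L \<le> Suc 0")
    case True
    have one: "\<forall>a1\<in>?L. \<forall>a2\<in>?L. a1 = a2" using card_le_Suc0_iff_eq[OF finL] True by blast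
    have eq: "\<forall>k\<in>S. (if lam k = \<mu> then c k else 0) = (if \<mu> \<in> ?L then c k else 0)"
    proof
      fix k assume k: "k \<in> S"
      show "(if lam k = \<mu> then c k else 0) = (if \<mu> \<in> ?L then c k else 0)"
      proof (cases "c k = 0")
        case False
        hence lk: "lam k \<in> ?L" using k by blast
        show ?thesis
        proof (cases "\<mu> \<in> ?L")
          case True
          hence "lam k = \<mu>" using one lk by blast
          thus ?thesis using True by simp
        next
          case F: False
          hence "lam k \<noteq> \<mu>" using lk by metis
          thus ?thesis using F by simp
        qed
      qed simp
    qed
    show ?thesis
    proof (intro allI impI)
      fix i assume i: "i < n"
      have "(\<Sum>k\<in>S. (if lam k = \<mu> then c k else 0) * y k $ i) = (\<Sum>k\<in>S. (if \<mu> \<in> ?L then c k else 0) * y k $ i)"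
        using eq by (intro sum.cong) auto
      also have "\<dots> = 0" using less.prems i by (cases "\<mu> \<in> ?L") auto
      finally show "(\<Sum>k\<in>S. (if lam k = \<mu> then c k else 0) * y k $ i) = 0" .
    qed
  next
    case False
    have "\<not> (\<forall>a1\<in>?L. \<forall>a2\<in>?L. a1 = a2)" using False card_le_Suc0_iff_eq[OF finL] by blast
    then obtain \<mu>0 \<mu>1 where m01: "\<mu>0 \<in> ?L" "\<mu>1 \<in> ?L" "\<mu>0 \<noteq> \<mu>1"
      by blast
    have "\<exists>a\<in>?L. a \<noteq> \<mu>" using m01 by metis
    then obtain a where a: "a \<in> ?L" "a \<noteq> \<mu>" by blast
    define ca where "ca = (\<lambda>k. c k * (lam k - a))"
    have "{k\<in>S. ca k \<noteq> 0} = {k\<in>S. c k \<noteq> 0 \<and> lam k \<noteq> a}" unfolding ca_def by auto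
    hence "lam ` {k\<in>S. ca k \<noteq> 0} = ?L - {a}" by blast
    hence lt: "card (lam ` {k\<in>S. ca k \<noteq> 0}) < card ?L"
      using a(1) finL by (metis card_Diff1_less)
    have IH: "\<forall>i<n. (\<Sum>k\<in>S. (if lam k = \<mu> then ca k else 0) * y k $ i) = 0"
      using less.hyps[OF lt] scale[of a] unfolding ca_def by blast
    show ?thesis
    proof (intro allI impI)
      fix i assume i: "i < n"
      have "(\<Sum>k\<in>S. (if lam k = \<mu> then ca k else 0) * y k $ i) =
            (\<mu> - a) * (\<Sum>k\<in>S. (if lam k = \<mu> then c k else 0) * y k $ i)"
        unfolding ca_def sum_distrib_left by (intro sum.cong) auto
      thus "(\<Sum>k\<in>S. (if lam k = \<mu> then c k else 0) * y k $ i) = 0" using IH i a(2) by simp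
    qed
  qed
qed

lemma eigen_split_inj:
  fixes g :: "complex mat" and y :: "'k \<Rightarrow> complex vec" and lam :: "'k \<Rightarrow> complex"
  assumes g: "g \<in> carrier_mat n n" and fin: "finite S"
  and y: "\<forall>k\<in>S. y k \<in> carrier_vec n" and ev: "\<forall>k\<in>S. g *\<^sub>v y k = lam k \<cdot>\<^sub>v y k"
  and inj: "inj_on lam S"
  and rel: "\<forall>i<n. (\<Sum>k\<in>S. c k * y k $ i) = 0"
  shows "\<forall>k\<in>S. \<forall>i<n. c k * y k $ i = 0"
proof (intro ballI allI impI)
  fix k i assume k: "k \<in> S" and i: "i < n"
  have "(\<Sum>j\<in>S. (if lam j = lam k then c j else 0) * y j $ i) = 0"
    using eigen_split[OF g fin y ev rel] i by blast
  moreover have "(\<Sum>j\<in>S. (if lam j = lam k then c j else 0) * y j $ i) = (\<Sum>j\<in>S. (if j = k then c k * y k $ i else 0))"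
    using inj k by (intro sum.cong) (auto dest: inj_onD)
  ultimately show "c k * y k $ i = 0" using k fin by simp
qed



lemma smult_mat_vec:
  fixes A :: "complex mat"
  assumes A: "A \<in> carrier_mat n n" and y: "y \<in> carrier_vec n"
  shows "(k \<cdot>\<^sub>m A) *\<^sub>v y = k \<cdot>\<^sub>v (A *\<^sub>v y)"
  using A y by (intro eq_vecI) (auto simp: scalar_prod_def sum_distrib_left mult.assoc)

lemma funpow_carrier:
  fixes A :: "complex mat"
  assumes A: "A \<in> carrier_mat n n"
  shows "y \<in> carrier_vec n \<Longrightarrow> ((\<lambda>y. A *\<^sub>v y) ^^ a) y \<in> carrier_vec n"
  using A by (induction a) auto

lemma funpow_zero:
  fixes A :: "complex mat"
  assumes A: "A \<in> carrier_mat n n"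
  shows "((\<lambda>y. A *\<^sub>v y) ^^ a) (0\<^sub>v n) = 0\<^sub>v n"
  using A by (induction a) auto

lemma funpow_comm:
  fixes A B :: "complex mat"
  assumes A: "A \<in> carrier_mat n n" and B: "B \<in> carrier_mat n n" and AB: "A * B = B * A"
  shows "y \<in> carrier_vec n \<Longrightarrow> B *\<^sub>v ((\<lambda>y. A *\<^sub>v y) ^^ a) y = ((\<lambda>y. A *\<^sub>v y) ^^ a) (B *\<^sub>v y)"
proof (induction a)
  case (Suc a)
  have c: "((\<lambda>y. A *\<^sub>v y) ^^ a) y \<in> carrier_vec n" using funpow_carrier[OF A Suc.prems] .
  have "B *\<^sub>v (A *\<^sub>v ((\<lambda>y. A *\<^sub>v y) ^^ a) y) = (B * A) *\<^sub>v ((\<lambda>y. A *\<^sub>v y) ^^ a) y"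
    using A B c by simp
  also have "\<dots> = A *\<^sub>v (B *\<^sub>v ((\<lambda>y. A *\<^sub>v y) ^^ a) y)" using A B c AB[symmetric] by simp
  finally show ?case using Suc by simp
qed simp

lemma funpow_eig:
  fixes A g :: "complex mat"
  assumes A: "A \<in> carrier_mat n n" and g: "g \<in> carrier_mat n n"
  and e: "\<forall>y\<in>carrier_vec n. g *\<^sub>v (A *\<^sub>v y) = s \<cdot>\<^sub>v (A *\<^sub>v (g *\<^sub>v y))"
  shows "y \<in> carrier_vec n \<Longrightarrow> g *\<^sub>v ((\<lambda>y. A *\<^sub>v y) ^^ a) y = s ^ a \<cdot>\<^sub>v ((\<lambda>y. A *\<^sub>v y) ^^ a) (g *\<^sub>v y)"
proof (induction a)
  case (Suc a)
  have c: "((\<lambda>y. A *\<^sub>v y) ^^ a) y \<in> carrier_vec n" using funpow_carrier[OF A Suc.prems] .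
  have c2: "((\<lambda>y. A *\<^sub>v y) ^^ a) (g *\<^sub>v y) \<in> carrier_vec n"
    using funpow_carrier[OF A] g Suc.prems by simp
  have "g *\<^sub>v (A *\<^sub>v ((\<lambda>y. A *\<^sub>v y) ^^ a) y) = s \<cdot>\<^sub>v (A *\<^sub>v (g *\<^sub>v ((\<lambda>y. A *\<^sub>v y) ^^ a) y))"
    using e c by blast
  also have "\<dots> = s \<cdot>\<^sub>v (A *\<^sub>v (s ^ a \<cdot>\<^sub>v ((\<lambda>y. A *\<^sub>v y) ^^ a) (g *\<^sub>v y)))" using Suc by simp
  also have "\<dots> = s ^ Suc a \<cdot>\<^sub>v (A *\<^sub>v ((\<lambda>y. A *\<^sub>v y) ^^ a) (g *\<^sub>v y))"
    using mult_mat_vec[OF A c2] by (simp add: smult_smult_assoc mult.commute)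
  finally show ?case by simp
qed (use g in simp)

lemma pow_mat_funpow:
  fixes A :: "complex mat"
  assumes A: "A \<in> carrier_mat n n"
  shows "y \<in> carrier_vec n \<Longrightarrow> (A ^\<^sub>m j) *\<^sub>v y = ((\<lambda>y. A *\<^sub>v y) ^^ j) y"
proof (induction j arbitrary: y)
  case 0 then show ?case using A by simp
next
  case (Suc j)
  have "(A ^\<^sub>m Suc j) *\<^sub>v y = (A ^\<^sub>m j) *\<^sub>v (A *\<^sub>v y)"
    using A Suc.prems by (simp add: assoc_mult_mat_vec[of "A ^\<^sub>m j" n n A n])
  also have "\<dots> = ((\<lambda>y. A *\<^sub>v y) ^^ j) (A *\<^sub>v y)" using Suc.IH[of "A *\<^sub>v y"] A Suc.prems by simp
  finally show ?case by (simp add: funpow_Suc_right del: funpow.simps)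
qed

lemma nil_abstract:
  fixes g :: "complex mat" and y :: "nat \<Rightarrow> complex vec"
  assumes g: "g \<in> carrier_mat n n" and y: "\<forall>k. y k \<in> carrier_vec n"
  and ev: "\<forall>k. g *\<^sub>v y k = (\<mu> * 2 ^ k) \<cdot>\<^sub>v y k" and mu: "\<mu> \<noteq> 0"
  and step: "\<forall>k. y k = 0\<^sub>v n \<longrightarrow> y (Suc k) = 0\<^sub>v n"
  shows "y n = 0\<^sub>v n"
proof -
  obtain c where c: "\<exists>k\<le>n. c k \<noteq> 0" and rel: "\<forall>i<n. (\<Sum>k\<le>n. c k * y k $ i) = 0"
    using dependence[of n y] y by blast
  have inj: "inj_on (\<lambda>k. \<mu> * 2 ^ k :: complex) {..n}"
  proof (rule inj_onI)
    fix a b assume "\<mu> * 2 ^ a = (\<mu> * 2 ^ b :: complex)"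
    hence "(2::complex) ^ a = 2 ^ b" using mu by simp
    hence "of_nat (2 ^ a) = (of_nat (2 ^ b) :: complex)" by simp
    hence "(2::nat) ^ a = 2 ^ b" using of_nat_eq_iff by blast
    thus "a = b" by simp
  qed
  have z: "\<forall>k\<in>{..n}. \<forall>i<n. c k * y k $ i = 0"
    by (rule eigen_split_inj[OF g _ _ _ inj rel]) (use y ev in auto)
  from c obtain k where k: "k \<le> n" "c k \<noteq> 0" by blast
  have "y k = 0\<^sub>v n" using z k y by (intro eq_vecI) auto
  have "y (k + j) = 0\<^sub>v n" for j
    by (induction j) (use \<open>y k = 0\<^sub>v n\<close> step in auto)
  from this[of "n - k"] show ?thesis using k by simp
qed



lemma funpow_smult:
  fixes A :: "complex mat"
  assumes A: "A \<in> carrier_mat n n"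
  shows "y \<in> carrier_vec n \<Longrightarrow> ((\<lambda>y. A *\<^sub>v y) ^^ a) (k \<cdot>\<^sub>v y) = k \<cdot>\<^sub>v ((\<lambda>y. A *\<^sub>v y) ^^ a) y"
proof (induction a)
  case (Suc a)
  then show ?case using mult_mat_vec[OF A funpow_carrier[OF A Suc.prems]] by simp
qed simp

lemma mat_vec_zero:
  fixes A :: "complex mat"
  assumes A: "A \<in> carrier_mat n n"
  shows "A *\<^sub>v 0\<^sub>v n = 0\<^sub>v n"
  using A by (intro eq_vecI) (auto simp: scalar_prod_def)

locale qs =
  fixes n :: nat and B1 B2 B3 :: "complex mat" and v :: "complex vec"
  assumes B1: "B1 \<in> carrier_mat n n" and B2: "B2 \<in> carrier_mat n n" and B3: "B3 \<in> carrier_mat n n"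
  and v: "v \<in> carrier_vec n"
  and c12: "B1 * B2 = B2 * B1" and c13: "B1 * B3 = B3 * B1" and c23: "B2 * B3 = B3 * B2"
  and T0: "\<And>t1 t2. t1 \<noteq> 0 \<Longrightarrow> t2 \<noteq> 0 \<Longrightarrow> \<exists>g\<in>carrier_mat n n.
      (\<forall>y\<in>carrier_vec n. g *\<^sub>v (B1 *\<^sub>v y) = (1/t1) \<cdot>\<^sub>v (B1 *\<^sub>v (g *\<^sub>v y))) \<and>
      (\<forall>y\<in>carrier_vec n. g *\<^sub>v (B2 *\<^sub>v y) = (1/t2) \<cdot>\<^sub>v (B2 *\<^sub>v (g *\<^sub>v y))) \<and>
      (\<forall>y\<in>carrier_vec n. g *\<^sub>v (B3 *\<^sub>v y) = (t1*t2) \<cdot>\<^sub>v (B3 *\<^sub>v (g *\<^sub>v y))) \<and> g *\<^sub>v v = v"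
  and cyc: "\<And>W. W \<subseteq> carrier_vec n \<Longrightarrow> 0\<^sub>v n \<in> W \<Longrightarrow> (\<forall>x\<in>W. \<forall>y\<in>W. x + y \<in> W) \<Longrightarrow>
      (\<forall>a. \<forall>x\<in>W. a \<cdot>\<^sub>v x \<in> W) \<Longrightarrow> (\<forall>x\<in>W. B1 *\<^sub>v x \<in> W \<and> B2 *\<^sub>v x \<in> W \<and> B3 *\<^sub>v x \<in> W) \<Longrightarrow>
      v \<in> W \<Longrightarrow> carrier_vec n \<subseteq> W"
begin

definition mv :: "nat \<times> nat \<times> nat \<Rightarrow> complex vec" where
  "mv m = (case m of (a,b,c) \<Rightarrow> ((\<lambda>y. B1 *\<^sub>v y) ^^ a) (((\<lambda>y. B2 *\<^sub>v y) ^^ b) (((\<lambda>y. B3 *\<^sub>v y) ^^ c) v)))"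

lemma mv_carrier[simp]: "mv m \<in> carrier_vec n"
  unfolding mv_def using funpow_carrier[OF B1] funpow_carrier[OF B2] funpow_carrier[OF B3] v
  by (auto split: prod.splits)

lemma mv_B1: "B1 *\<^sub>v mv (a,b,c) = mv (Suc a, b, c)"
  unfolding mv_def by simp

lemma mv_B2: "B2 *\<^sub>v mv (a,b,c) = mv (a, Suc b, c)"
  unfolding mv_def
  using funpow_comm[OF B1 B2 c12] funpow_carrier[OF B2] funpow_carrier[OF B3] v by simp

lemma mv_B3: "B3 *\<^sub>v mv (a,b,c) = mv (a, b, Suc c)"
proof -
  have y: "((\<lambda>y. B3 *\<^sub>v y) ^^ c) v \<in> carrier_vec n" using funpow_carrier[OF B3] v by simp
  have y2: "((\<lambda>y. B2 *\<^sub>v y) ^^ b) (((\<lambda>y. B3 *\<^sub>v y) ^^ c) v) \<in> carrier_vec n"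
    using funpow_carrier[OF B2 y] .
  show ?thesis unfolding mv_def
    using funpow_comm[OF B1 B3 c13 y2] funpow_comm[OF B2 B3 c23 y] by simp
qed

lemma mv_0: "mv (0,0,0) = v" unfolding mv_def by simp

lemma mv_00c: "mv (0,0,c) = ((\<lambda>y. B3 *\<^sub>v y) ^^ c) v" unfolding mv_def by simp

definition chi :: "complex \<Rightarrow> complex \<Rightarrow> nat \<times> nat \<times> nat \<Rightarrow> complex" where
  "chi t1 t2 m = (case m of (a,b,c) \<Rightarrow> (1/t1)^a * (1/t2)^b * (t1*t2)^c)"

lemma mv_eig:
  assumes t: "t1 \<noteq> 0" "t2 \<noteq> 0"
  shows "\<exists>g\<in>carrier_mat n n. \<forall>m. g *\<^sub>v mv m = chi t1 t2 m \<cdot>\<^sub>v mv m"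
proof -
  obtain g where g: "g \<in> carrier_mat n n"
    and e1: "\<forall>y\<in>carrier_vec n. g *\<^sub>v (B1 *\<^sub>v y) = (1/t1) \<cdot>\<^sub>v (B1 *\<^sub>v (g *\<^sub>v y))"
    and e2: "\<forall>y\<in>carrier_vec n. g *\<^sub>v (B2 *\<^sub>v y) = (1/t2) \<cdot>\<^sub>v (B2 *\<^sub>v (g *\<^sub>v y))"
    and e3: "\<forall>y\<in>carrier_vec n. g *\<^sub>v (B3 *\<^sub>v y) = (t1*t2) \<cdot>\<^sub>v (B3 *\<^sub>v (g *\<^sub>v y))"
    and gv: "g *\<^sub>v v = v"
    using T0[OF t] by blast
  have "g *\<^sub>v mv m = chi t1 t2 m \<cdot>\<^sub>v mv m" for m
  proof -
    obtain a b c where m: "m = (a,b,c)" by (cases m) auto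
    let ?z3 = "((\<lambda>y. B3 *\<^sub>v y) ^^ c) v"
    let ?z2 = "((\<lambda>y. B2 *\<^sub>v y) ^^ b) ?z3"
    have z3: "?z3 \<in> carrier_vec n" using funpow_carrier[OF B3] v by simp
    have z2: "?z2 \<in> carrier_vec n" using funpow_carrier[OF B2 z3] .
    have "g *\<^sub>v ?z3 = (t1*t2)^c \<cdot>\<^sub>v ?z3" using funpow_eig[OF B3 g e3 v] gv by simp
    hence "g *\<^sub>v ?z2 = (1/t2)^b \<cdot>\<^sub>v ((t1*t2)^c \<cdot>\<^sub>v ?z2)"
      using funpow_eig[OF B2 g e2 z3] funpow_smult[OF B2 z3] by simp
    hence "g *\<^sub>v mv m = (1/t1)^a \<cdot>\<^sub>v ((1/t2)^b \<cdot>\<^sub>v ((t1*t2)^c \<cdot>\<^sub>v mv m))"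
      unfolding m mv_def using funpow_eig[OF B1 g e1 z2] funpow_smult[OF B1] z2
      by (simp add: funpow_smult[OF B1])
    thus ?thesis unfolding m chi_def by (simp add: smult_smult_assoc mult.assoc)
  qed
  thus ?thesis using g by blast
qed

lemma mv_nil1: "mv (a + n, b, c) = 0\<^sub>v n"
proof -
  obtain g where g: "g \<in> carrier_mat n n" and e: "\<forall>m. g *\<^sub>v mv m = chi (1/2) 1 m \<cdot>\<^sub>v mv m"
    using mv_eig[of "1/2" 1] by auto
  show ?thesis
  proof (rule nil_abstract[OF g, of "\<lambda>k. mv (a + k, b, c)" "2^a * (1/2)^c"])
    show "\<forall>k. g *\<^sub>v mv (a + k, b, c) = (2 ^ a * (1 / 2) ^ c * 2 ^ k) \<cdot>\<^sub>v mv (a + k, b, c)"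
      using e by (simp add: chi_def power_add mult_ac)
    show "\<forall>k. mv (a + k, b, c) = 0\<^sub>v n \<longrightarrow> mv (a + Suc k, b, c) = 0\<^sub>v n"
      using mv_B1 mat_vec_zero[OF B1] by (metis add_Suc_right)
  qed auto
qed

lemma mv_nil2: "mv (a, b + n, c) = 0\<^sub>v n"
proof -
  obtain g where g: "g \<in> carrier_mat n n" and e: "\<forall>m. g *\<^sub>v mv m = chi 1 (1/2) m \<cdot>\<^sub>v mv m"
    using mv_eig[of 1 "1/2"] by auto
  show ?thesis
  proof (rule nil_abstract[OF g, of "\<lambda>k. mv (a, b + k, c)" "2^b * (1/2)^c"])
    show "\<forall>k. g *\<^sub>v mv (a, b + k, c) = (2 ^ b * (1 / 2) ^ c * 2 ^ k) \<cdot>\<^sub>v mv (a, b + k, c)"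
      using e by (simp add: chi_def power_add mult_ac)
    show "\<forall>k. mv (a, b + k, c) = 0\<^sub>v n \<longrightarrow> mv (a, b + Suc k, c) = 0\<^sub>v n"
      using mv_B2 mat_vec_zero[OF B2] by (metis add_Suc_right)
  qed auto
qed

lemma mv_nil3: "mv (a, b, c + n) = 0\<^sub>v n"
proof -
  obtain g where g: "g \<in> carrier_mat n n" and e: "\<forall>m. g *\<^sub>v mv m = chi 2 1 m \<cdot>\<^sub>v mv m"
    using mv_eig[of 2 1] by auto
  show ?thesis
  proof (rule nil_abstract[OF g, of "\<lambda>k. mv (a, b, c + k)" "(1/2)^a * 2^c"])
    show "\<forall>k. g *\<^sub>v mv (a, b, c + k) = ((1/2)^a * 2^c * 2 ^ k) \<cdot>\<^sub>v mv (a, b, c + k)"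
      using e by (simp add: chi_def power_add mult_ac)
    show "\<forall>k. mv (a, b, c + k) = 0\<^sub>v n \<longrightarrow> mv (a, b, c + Suc k) = 0\<^sub>v n"
      using mv_B3 mat_vec_zero[OF B3] by (metis add_Suc_right)
  qed auto
qed

lemma mv_nil: "a \<ge> n \<or> b \<ge> n \<or> c \<ge> n \<Longrightarrow> mv (a,b,c) = 0\<^sub>v n"
  using mv_nil1[of "a - n" b c] mv_nil2[of a "b - n" c] mv_nil3[of a b "c - n"] by auto

end


context qs begin

definition comb :: "(nat \<times> nat \<times> nat) set \<Rightarrow> (nat \<times> nat \<times> nat \<Rightarrow> complex) \<Rightarrow> complex vec" where
  "comb S c = vec n (\<lambda>i. \<Sum>k\<in>S. c k * mv k $ i)"

lemma comb_carrier[simp]: "comb S c \<in> carrier_vec n" unfolding comb_def by simp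

lemma mat_comb:
  assumes A: "A \<in> carrier_mat n n"
  shows "A *\<^sub>v comb S c = vec n (\<lambda>i. \<Sum>k\<in>S. c k * (A *\<^sub>v mv k) $ i)"
proof (rule eq_vecI)
  fix i assume "i < dim_vec (vec n (\<lambda>i. \<Sum>k\<in>S. c k * (A *\<^sub>v mv k) $ i))"
  hence i: "i < n" by simp
  have "(A *\<^sub>v comb S c) $ i = (\<Sum>j<n. A $$ (i,j) * (\<Sum>k\<in>S. c k * mv k $ j))"
    using A i by (simp add: comb_def scalar_prod_def lessThan_atLeast0)
  also have "\<dots> = (\<Sum>k\<in>S. c k * (A *\<^sub>v mv k) $ i)"
    using mat_vec_sum[OF A _ i, of S mv c] by simp
  finally show "(A *\<^sub>v comb S c) $ i = vec n (\<lambda>i. \<Sum>k\<in>S. c k * (A *\<^sub>v mv k) $ i) $ i" using i by simp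
qed (use A in simp)

lemma comb_add:
  assumes "finite S" "finite S'"
  shows "comb S c + comb S' d = comb (S \<union> S') (\<lambda>k. (if k \<in> S then c k else 0) + (if k \<in> S' then d k else 0))"
proof (rule eq_vecI)
  fix i assume "i < dim_vec (comb (S \<union> S') (\<lambda>k. (if k \<in> S then c k else 0) + (if k \<in> S' then d k else 0)))"
  hence i: "i < n" by (simp add: comb_def)
  have fin: "finite (S \<union> S')" using assms by simp
  have "(\<Sum>k\<in>S \<union> S'. ((if k \<in> S then c k else 0) + (if k \<in> S' then d k else 0)) * mv k $ i)
      = (\<Sum>k\<in>S \<union> S'. (if k \<in> S then c k * mv k $ i else 0)) + (\<Sum>k\<in>S \<union> S'. (if k \<in> S' then d k * mv k $ i else 0))"
    by (simp add: sum.distrib[symmetric] distrib_right) (intro sum.cong, auto)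
  also have "\<dots> = (\<Sum>k\<in>S. c k * mv k $ i) + (\<Sum>k\<in>S'. d k * mv k $ i)"
    using sum.inter_restrict[OF fin, of "\<lambda>k. c k * mv k $ i" S] sum.inter_restrict[OF fin, of "\<lambda>k. d k * mv k $ i" S']
    by (simp add: Int_absorb1)
  finally show "(comb S c + comb S' d) $ i = comb (S \<union> S') (\<lambda>k. (if k \<in> S then c k else 0) + (if k \<in> S' then d k else 0)) $ i"
    using i by (simp add: comb_def)
qed (simp add: comb_def)

lemma comb_smult: "a \<cdot>\<^sub>v comb S c = comb S (\<lambda>k. a * c k)"
  unfolding comb_def by (intro eq_vecI) (auto simp: sum_distrib_left mult.assoc)

lemma comb_shift:
  assumes A: "A \<in> carrier_mat n n" and inj: "inj_on h S" and hk: "\<forall>k\<in>S. A *\<^sub>v mv k = mv (h k)"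
  shows "A *\<^sub>v comb S c = comb (h ` S) (\<lambda>k'. c (inv_into S h k'))"
proof -
  have "A *\<^sub>v comb S c = vec n (\<lambda>i. \<Sum>k\<in>S. c k * mv (h k) $ i)"
    unfolding mat_comb[OF A] using hk by (intro eq_vecI) auto
  also have "\<dots> = comb (h ` S) (\<lambda>k'. c (inv_into S h k'))"
    unfolding comb_def using inj by (intro eq_vecI) (auto simp: sum.reindex inv_into_f_f)
  finally show ?thesis .
qed

lemma span: "x \<in> carrier_vec n \<Longrightarrow> \<exists>S c. finite S \<and> x = comb S c"
proof -
  let ?W = "{x. \<exists>S c. finite S \<and> x = comb S c}"
  have "carrier_vec n \<subseteq> ?W"
  proof (rule cyc)
    show "?W \<subseteq> carrier_vec n" by auto
    show "0\<^sub>v n \<in> ?W" by (rule CollectI, rule exI[of _ "{}"]) (auto simp: comb_def)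
    show "\<forall>x\<in>?W. \<forall>y\<in>?W. x + y \<in> ?W" using comb_add by blast
    show "\<forall>a. \<forall>x\<in>?W. a \<cdot>\<^sub>v x \<in> ?W" using comb_smult by blast
    show "v \<in> ?W"
    proof (rule CollectI, intro exI conjI)
      show "v = comb {(0,0,0)} (\<lambda>_. 1)" unfolding comb_def using mv_0 v by (intro eq_vecI) auto
    qed simp
    have s1: "\<forall>k\<in>S. B1 *\<^sub>v mv k = mv ((\<lambda>(a,b,c). (Suc a, b, c)) k)" for S
      using mv_B1 by auto
    have s2: "\<forall>k\<in>S. B2 *\<^sub>v mv k = mv ((\<lambda>(a,b,c). (a, Suc b, c)) k)" for S
      using mv_B2 by auto
    have s3: "\<forall>k\<in>S. B3 *\<^sub>v mv k = mv ((\<lambda>(a,b,c). (a, b, Suc c)) k)" for S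
      using mv_B3 by auto
    have i1: "inj_on (\<lambda>(a::nat,b::nat,c::nat). (Suc a, b, c)) S" for S by (auto simp: inj_on_def)
    have i2: "inj_on (\<lambda>(a::nat,b::nat,c::nat). (a, Suc b, c)) S" for S by (auto simp: inj_on_def)
    have i3: "inj_on (\<lambda>(a::nat,b::nat,c::nat). (a, b, Suc c)) S" for S by (auto simp: inj_on_def)
    show "\<forall>x\<in>?W. B1 *\<^sub>v x \<in> ?W \<and> B2 *\<^sub>v x \<in> ?W \<and> B3 *\<^sub>v x \<in> ?W"
    proof
      fix x assume "x \<in> ?W"
      then obtain S c where S: "finite S" "x = comb S c" by blast
      show "B1 *\<^sub>v x \<in> ?W \<and> B2 *\<^sub>v x \<in> ?W \<and> B3 *\<^sub>v x \<in> ?W"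
        unfolding S(2) comb_shift[OF B1 i1 s1] comb_shift[OF B2 i2 s2] comb_shift[OF B3 i3 s3]
        using S(1) by blast
    qed
  qed
  thus "x \<in> carrier_vec n \<Longrightarrow> ?thesis" by blast
qed

end


lemma step_exists: "P (0::nat) \<Longrightarrow> \<not> P N \<Longrightarrow> \<exists>J. P J \<and> \<not> P (Suc J)"
  by (induction N) auto

lemma int_K_zero:
  fixes x y :: int and K :: nat
  assumes "\<bar>x\<bar> < int K" "x = int K * y"
  shows "y = 0"
proof (rule ccontr)
  assume "y \<noteq> 0"
  hence "1 \<le> \<bar>y\<bar>" by simp
  hence "int K * 1 \<le> int K * \<bar>y\<bar>" by (intro mult_left_mono) auto
  hence "int K \<le> \<bar>x\<bar>" using assms(2) by (simp add: abs_mult)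
  thus False using assms(1) by simp
qed

context qs begin

definition cls :: "nat \<times> nat \<times> nat \<Rightarrow> int \<times> int" where
  "cls m = (case m of (a,b,c) \<Rightarrow> (int a - int c, int b - int c))"

lemma diag_shift: "((B1 * B2 * B3) ^\<^sub>m j) *\<^sub>v mv (a,b,c) = mv (a+j, b+j, c+j)"
proof -
  have P: "B1 * B2 * B3 \<in> carrier_mat n n" using B1 B2 B3 by simp
  have Pv: "(B1 * B2 * B3) *\<^sub>v y = B1 *\<^sub>v (B2 *\<^sub>v (B3 *\<^sub>v y))" if "y \<in> carrier_vec n" for y
  proof -
    have "(B1 * B2 * B3) *\<^sub>v y = (B1 * B2) *\<^sub>v (B3 *\<^sub>v y)"
      using assoc_mult_mat_vec[of "B1 * B2" n n B3 n y] B1 B2 B3 that by simp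
    also have "\<dots> = B1 *\<^sub>v (B2 *\<^sub>v (B3 *\<^sub>v y))"
      using assoc_mult_mat_vec[of B1 n n B2 n "B3 *\<^sub>v y"] B1 B2 B3 that by simp
    finally show ?thesis .
  qed
  have "((\<lambda>y. (B1 * B2 * B3) *\<^sub>v y) ^^ j) (mv (a,b,c)) = mv (a+j, b+j, c+j)"
  proof (induction j)
    case (Suc j)
    then show ?case using Pv[of "mv (a+j,b+j,c+j)"] by (simp add: mv_B1 mv_B2 mv_B3)
  qed simp
  thus ?thesis using pow_mat_funpow[OF P mv_carrier] by simp
qed

lemma class_split:
  assumes fin: "finite S" and rel: "\<forall>i<n. (\<Sum>k\<in>S. d k * mv k $ i) = 0"
  and cl: "\<forall>k\<in>S. \<forall>k'\<in>S. d k \<noteq> 0 \<longrightarrow> d k' \<noteq> 0 \<longrightarrow> cls k = cls k'"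
  shows "\<forall>k\<in>S. \<forall>i<n. d k * mv k $ i = 0"
proof (rule ccontr)
  assume "\<not> ?thesis"
  then obtain k1 where k1: "k1 \<in> {k\<in>S. \<exists>i<n. d k * mv k $ i \<noteq> 0}" by blast
  define Z where "Z = {k\<in>S. \<exists>i<n. d k * mv k $ i \<noteq> 0}"
  obtain m0 where m0: "m0 \<in> Z" and mn: "\<forall>k. k \<in> Z \<longrightarrow> snd (snd m0) \<le> snd (snd k)"
    using ex_has_least_nat[of "\<lambda>k. k \<in> Z" k1 "\<lambda>k. snd (snd k)"] k1 unfolding Z_def by blast
  obtain a0 b0 c0 where m0e: "m0 = (a0,b0,c0)" by (cases m0) auto
  have m0S: "m0 \<in> S" and dm0: "d m0 \<noteq> 0" using m0 unfolding Z_def by auto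
  have nz0: "mv (a0+0, b0+0, c0+0) \<noteq> 0\<^sub>v n" using m0 unfolding Z_def m0e by auto
  have "mv (a0+n, b0+n, c0+n) = 0\<^sub>v n" by (rule mv_nil) simp
  then obtain J where J1: "mv (a0+J, b0+J, c0+J) \<noteq> 0\<^sub>v n" and J2: "mv (a0+Suc J, b0+Suc J, c0+Suc J) = 0\<^sub>v n"
    using step_exists[of "\<lambda>j. mv (a0+j, b0+j, c0+j) \<noteq> 0\<^sub>v n" n] nz0 by blast
  have beyond: "mv (a0 + (Suc J + j), b0 + (Suc J + j), c0 + (Suc J + j)) = 0\<^sub>v n" for j
  proof (induction j)
    case 0 then show ?case using J2 by simp
  next
    case (Suc j)
    have "mv (a0 + (Suc J + Suc j), b0 + (Suc J + Suc j), c0 + (Suc J + Suc j)) =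
      B1 *\<^sub>v (B2 *\<^sub>v (B3 *\<^sub>v mv (a0 + (Suc J + j), b0 + (Suc J + j), c0 + (Suc J + j))))"
      by (simp add: mv_B1 mv_B2 mv_B3)
    also have "\<dots> = 0\<^sub>v n" using Suc mat_vec_zero[OF B1] mat_vec_zero[OF B2] mat_vec_zero[OF B3] by simp
    finally show ?case .
  qed
  define M where "M = (B1 * B2 * B3) ^\<^sub>m J"
  have M: "M \<in> carrier_mat n n" unfolding M_def using B1 B2 B3 by simp
  have rel2: "\<forall>i<n. (\<Sum>k\<in>S. d k * (M *\<^sub>v mv k) $ i) = 0"
    using rel_apply[OF M _ rel] by simp
  have others: "d k * (M *\<^sub>v mv k) $ i = 0" if k: "k \<in> S - {m0}" and i: "i < n" for k i
  proof (cases "d k = 0")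
    case False
    show ?thesis
    proof (cases "k \<in> Z")
      case False
      hence "\<forall>i<n. d k * mv k $ i = 0" using k unfolding Z_def by auto
      hence "mv k = 0\<^sub>v n" using \<open>d k \<noteq> 0\<close> by (intro eq_vecI) auto
      thus ?thesis using mat_vec_zero[OF M] i by simp
    next
      case True
      obtain a b c where ke: "k = (a,b,c)" by (cases k) auto
      have "cls k = cls m0" using cl k m0S dm0 \<open>d k \<noteq> 0\<close> by blast
      hence e1: "int a - int c = int a0 - int c0" and e2: "int b - int c = int b0 - int c0"
        unfolding ke m0e cls_def by auto
      have "c0 \<le> c" using mn True unfolding ke m0e by force
      moreover have "c \<noteq> c0" using e1 e2 k unfolding ke m0e by auto
      ultimately have j: "c - c0 + J = Suc J + (c - c0 - 1)" by simp
      have "k = (a0 + (c - c0), b0 + (c - c0), c0 + (c - c0))" using e1 e2 \<open>c0 \<le> c\<close> unfolding ke by auto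
      hence "M *\<^sub>v mv k = mv (a0 + (c - c0) + J, b0 + (c - c0) + J, c0 + (c - c0) + J)"
        unfolding M_def by (simp add: diag_shift)
      also have "\<dots> = mv (a0 + (Suc J + (c - c0 - 1)), b0 + (Suc J + (c - c0 - 1)), c0 + (Suc J + (c - c0 - 1)))"
        by (simp only: add.assoc j)
      also have "\<dots> = 0\<^sub>v n" by (rule beyond)
      finally show ?thesis using i by simp
    qed
  qed simp
  have "\<forall>i<n. d m0 * mv (a0+J, b0+J, c0+J) $ i = 0"
  proof (intro allI impI)
    fix i assume i: "i < n"
    have "(\<Sum>k\<in>S. d k * (M *\<^sub>v mv k) $ i) = d m0 * (M *\<^sub>v mv m0) $ i + (\<Sum>k\<in>S - {m0}. d k * (M *\<^sub>v mv k) $ i)"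
      using sum.remove[OF fin m0S] by blast
    also have "(\<Sum>k\<in>S - {m0}. d k * (M *\<^sub>v mv k) $ i) = 0" using others i by (intro sum.neutral) blast
    finally show "d m0 * mv (a0+J, b0+J, c0+J) $ i = 0"
      using rel2 i unfolding M_def m0e by (simp add: diag_shift)
  qed
  hence "mv (a0+J, b0+J, c0+J) = 0\<^sub>v n" using dm0 by (intro eq_vecI) auto
  thus False using J1 by blast
qed

end


lemma pow2_inj: "(2::complex) ^ a = 2 ^ b \<Longrightarrow> a = b"
proof -
  assume "(2::complex) ^ a = 2 ^ b"
  hence "of_nat (2 ^ a) = (of_nat (2 ^ b) :: complex)" by simp
  hence "(2::nat) ^ a = 2 ^ b" using of_nat_eq_iff by blast
  thus "a = b" by simp
qed

lemma chi_cls: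
  fixes a b c a' b' c' K :: nat
  assumes b1: "a + c' < K" and b2: "a' + c < K"
  and eq: "(2::complex)^a * (2^K)^b * (1/2 * (1/2^K))^c = 2^a' * (2^K)^b' * (1/2 * (1/2^K))^c'"
  shows "int a - int c = int a' - int c' \<and> int b - int c = int b' - int c'"
proof -
  define X :: complex where "X = 2 ^ Suc K"
  have X0: "X \<noteq> 0" unfolding X_def by simp
  have hX: "1/2 * (1/2^K) = 1 / X" unfolding X_def by simp
  have "(2::complex)^a * (2^K)^b / X^c = 2^a' * (2^K)^b' / X^c'"
    using eq unfolding hX by (simp add: power_divide)
  hence "(2::complex)^a * (2^K)^b * X^c' = 2^a' * (2^K)^b' * X^c"
    using X0 by (simp add: field_simps)
  hence "(2::complex)^(a + K*b + Suc K * c') = 2^(a' + K*b' + Suc K * c)"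
    unfolding X_def by (simp add: power_add power_mult mult.commute)
  hence N: "a + K*b + Suc K * c' = a' + K*b' + Suc K * c" by (rule pow2_inj)
  define x where "x = (int a - int c) - (int a' - int c')"
  define y where "y = (int b' - int c') - (int b - int c)"
  have "int (a + K*b + Suc K * c') = int (a' + K*b' + Suc K * c)" using N by simp
  hence "x - int K * y = 0" unfolding x_def y_def by (simp add: algebra_simps)
  hence xy: "x = int K * y" by simp
  have "\<bar>x\<bar> < int K" unfolding x_def using b1 b2 by linarith
  hence "y = 0" using int_K_zero xy by blast
  hence "x = 0" using xy by simp
  thus ?thesis using \<open>y = 0\<close> unfolding x_def y_def by linarith
qed

context qs begin

lemma mv_dim[simp]: "dim_vec (mv m) = n" using mv_carrier[of m] by simp

lemma split:
  assumes fin: "finite S" and rel: "\<forall>i<n. (\<Sum>k\<in>S. c k * mv k $ i) = 0"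
  shows "\<forall>k\<in>S. \<forall>i<n. c k * mv k $ i = 0"
proof -
  define sz where "sz = (\<Sum>k\<in>S. fst k + fst (snd k) + snd (snd k))"
  define K where "K = 2 * sz + 1"
  have bnd: "fst k + fst (snd k) + snd (snd k) \<le> sz" if "k \<in> S" for k
    unfolding sz_def using member_le_sum[of k S "\<lambda>k. fst k + fst (snd k) + snd (snd k)"] that fin by simp
  obtain g where g: "g \<in> carrier_mat n n" and e: "\<forall>m. g *\<^sub>v mv m = chi (1/2) (1/2^K) m \<cdot>\<^sub>v mv m"
    using mv_eig[of "1/2" "1/2^K"] by auto
  define lam where "lam = chi (1/2) (1/2^K)"
  have lam: "lam (a,b,c) = (2::complex)^a * (2^K)^b * (1/2 * (1/2^K))^c" for a b c
    unfolding lam_def chi_def by simp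
  show ?thesis
  proof (intro ballI allI impI)
    fix k i assume k: "k \<in> S" and i: "i < n"
    define d where "d = (\<lambda>k'. if lam k' = lam k then c k' else 0)"
    have rd: "\<forall>i<n. (\<Sum>k'\<in>S. d k' * mv k' $ i) = 0"
      unfolding d_def by (rule eigen_split[OF g fin _ _ rel]) (use e lam_def in auto)
    have cl: "\<forall>k1\<in>S. \<forall>k2\<in>S. d k1 \<noteq> 0 \<longrightarrow> d k2 \<noteq> 0 \<longrightarrow> cls k1 = cls k2"
    proof (intro ballI impI)
      fix k1 k2 assume k1: "k1 \<in> S" and k2: "k2 \<in> S" and "d k1 \<noteq> 0" "d k2 \<noteq> 0"
      hence l: "lam k1 = lam k2" unfolding d_def by (auto split: if_splits)
      obtain a1 b1 c1 where ke1: "k1 = (a1,b1,c1)" by (cases k1) auto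
      obtain a2 b2 c2 where ke2: "k2 = (a2,b2,c2)" by (cases k2) auto
      have "a1 + c2 < K" "a2 + c1 < K" using bnd[OF k1] bnd[OF k2] unfolding ke1 ke2 K_def by auto
      from chi_cls[OF this] l show "cls k1 = cls k2" unfolding ke1 ke2 lam cls_def by auto
    qed
    have "d k * mv k $ i = 0" using class_split[OF fin rd cl] k i by blast
    thus "c k * mv k $ i = 0" unfolding d_def by simp
  qed
qed

lemma swap_lemma:
  fixes SS :: "nat \<Rightarrow> (nat \<times> nat \<times> nat) set" and CC :: "nat \<Rightarrow> nat \<times> nat \<times> nat \<Rightarrow> complex"
  assumes T: "finite T" and sub: "\<forall>j<n. SS j \<subseteq> T"
  shows "(\<Sum>j<n. x j * (\<Sum>k\<in>SS j. w k * CC j k * mv k $ i)) =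
         (\<Sum>k\<in>T. w k * (\<Sum>j<n. x j * (if k \<in> SS j then CC j k else 0)) * mv k $ i)"
proof -
  have "(\<Sum>j<n. x j * (\<Sum>k\<in>SS j. w k * CC j k * mv k $ i)) =
        (\<Sum>j<n. x j * (\<Sum>k\<in>T. if k \<in> SS j then w k * CC j k * mv k $ i else 0))"
  proof (intro sum.cong refl)
    fix j assume "j \<in> {..<n}"
    hence "T \<inter> SS j = SS j" using sub by auto
    thus "x j * (\<Sum>k\<in>SS j. w k * CC j k * mv k $ i) = x j * (\<Sum>k\<in>T. if k \<in> SS j then w k * CC j k * mv k $ i else 0)"
      using sum.inter_restrict[OF T, of "\<lambda>k. w k * CC j k * mv k $ i" "SS j"] by simp
  qed
  also have "\<dots> = (\<Sum>j<n. \<Sum>k\<in>T. w k * mv k $ i * (x j * (if k \<in> SS j then CC j k else 0)))"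
    by (intro sum.cong refl) (auto simp: sum_distrib_left intro!: sum.cong)
  also have "\<dots> = (\<Sum>k\<in>T. \<Sum>j<n. w k * mv k $ i * (x j * (if k \<in> SS j then CC j k else 0)))"
    by (rule sum.swap)
  also have "\<dots> = (\<Sum>k\<in>T. w k * (\<Sum>j<n. x j * (if k \<in> SS j then CC j k else 0)) * mv k $ i)"
    by (intro sum.cong) (auto simp: sum_distrib_left[symmetric])
  finally show ?thesis .
qed

lemma exists_G: "\<exists>G\<in>carrier_mat n n. \<forall>m. G *\<^sub>v mv m = \<psi> m \<cdot>\<^sub>v mv m"
proof -
  have "\<forall>j. \<exists>p. finite (fst p) \<and> (j < n \<longrightarrow> unit_vec n j = comb (fst p) (snd p))"
  proof
    fix j show "\<exists>p. finite (fst p) \<and> (j < n \<longrightarrow> unit_vec n j = comb (fst p) (snd p))"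
    proof (cases "j < n")
      case True
      then obtain S c where "finite S" "unit_vec n j = comb S c" using span[of "unit_vec n j"] by auto
      thus ?thesis by (intro exI[of _ "(S,c)"]) auto
    qed (intro exI[of _ "({}, \<lambda>_. 0)"], auto)
  qed
  then obtain P where P: "\<forall>j. finite (fst (P j)) \<and> (j < n \<longrightarrow> unit_vec n j = comb (fst (P j)) (snd (P j)))"
    by metis
  define SS where "SS j = fst (P j)" for j
  define CC where "CC j = snd (P j)" for j
  have SSf: "finite (SS j)" for j using P unfolding SS_def by blast
  have SSu: "j < n \<Longrightarrow> unit_vec n j = comb (SS j) (CC j)" for j using P unfolding SS_def CC_def by blast
  define G where "G = mat n n (\<lambda>(i,j). comb (SS j) (\<lambda>k. \<psi> k * CC j k) $ i)"
  have G: "G \<in> carrier_mat n n" unfolding G_def by simp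
  have "G *\<^sub>v mv m = \<psi> m \<cdot>\<^sub>v mv m" for m
  proof -
    define T where "T = insert m (\<Union>j<n. SS j)"
    have T: "finite T" unfolding T_def using SSf by simp
    have sub: "\<forall>j<n. SS j \<subseteq> T" unfolding T_def by auto
    have mT: "m \<in> T" unfolding T_def by simp
    define D where "D k = (\<Sum>j<n. mv m $ j * (if k \<in> SS j then CC j k else 0))" for k
    have A: "(G *\<^sub>v mv m) $ i = (\<Sum>k\<in>T. \<psi> k * D k * mv k $ i)" if i: "i < n" for i
    proof -
      have "(G *\<^sub>v mv m) $ i = (\<Sum>j<n. mv m $ j * (\<Sum>k\<in>SS j. \<psi> k * CC j k * mv k $ i))"
        using i unfolding G_def by (auto simp: scalar_prod_def comb_def lessThan_atLeast0 mult.commute mult.assoc intro!: sum.cong)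
      also have "\<dots> = (\<Sum>k\<in>T. \<psi> k * D k * mv k $ i)"
        unfolding D_def by (rule swap_lemma[OF T sub])
      finally show ?thesis .
    qed
    have B: "mv m $ i = (\<Sum>k\<in>T. 1 * D k * mv k $ i)" if i: "i < n" for i
    proof -
      have "mv m $ i = (\<Sum>j<n. mv m $ j * unit_vec n j $ i)"
        using i by (simp add: if_distrib sum.delta cong: if_cong)
      also have "\<dots> = (\<Sum>j<n. mv m $ j * (\<Sum>k\<in>SS j. 1 * CC j k * mv k $ i))"
        using i SSu by (intro sum.cong) (auto simp: comb_def)
      also have "\<dots> = (\<Sum>k\<in>T. 1 * D k * mv k $ i)"
        unfolding D_def by (rule swap_lemma[OF T sub])
      finally show ?thesis .
    qed
    define E where "E k = D k - (if k = m then 1 else 0)" for k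
    have relE: "\<forall>i<n. (\<Sum>k\<in>T. E k * mv k $ i) = 0"
    proof (intro allI impI)
      fix i assume i: "i < n"
      have "(\<Sum>k\<in>T. E k * mv k $ i) = (\<Sum>k\<in>T. D k * mv k $ i) - (\<Sum>k\<in>T. (if k = m then mv k $ i else 0))"
      proof -
        have "(\<Sum>k\<in>T. E k * mv k $ i) = (\<Sum>k\<in>T. D k * mv k $ i - (if k = m then mv k $ i else 0))"
          unfolding E_def by (intro sum.cong refl) (auto simp: algebra_simps)
        thus ?thesis by (simp only: sum_subtractf)
      qed
      also have "\<dots> = 0" using B[OF i] mT T by simp
      finally show "(\<Sum>k\<in>T. E k * mv k $ i) = 0" .
    qed
    have z: "\<forall>k\<in>T. \<forall>i<n. E k * mv k $ i = 0" by (rule split[OF T relE])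
    show ?thesis
    proof (rule eq_vecI)
      fix i assume "i < dim_vec (\<psi> m \<cdot>\<^sub>v mv m)"
      hence i: "i < n" by simp
      have "(G *\<^sub>v mv m) $ i = (\<Sum>k\<in>T. \<psi> k * (if k = m then mv k $ i else 0))"
        unfolding A[OF i]
      proof (intro sum.cong refl)
        fix k assume k: "k \<in> T"
        have "E k * mv k $ i = 0" using z k i by blast
        thus "\<psi> k * D k * mv k $ i = \<psi> k * (if k = m then mv k $ i else 0)"
          unfolding E_def by (auto simp: algebra_simps split: if_splits)
      qed
      also have "\<dots> = \<psi> m * mv m $ i" using T mT by (simp add: if_distrib sum.delta cong: if_cong)
      finally show "(G *\<^sub>v mv m) $ i = (\<psi> m \<cdot>\<^sub>v mv m) $ i" using i by simp
    qed (use G in simp)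
  qed
  thus ?thesis using G by blast
qed

lemma mat_eq_mv:
  assumes M1: "M1 \<in> carrier_mat n n" and M2: "M2 \<in> carrier_mat n n"
  and eq: "\<And>m. M1 *\<^sub>v mv m = M2 *\<^sub>v mv m"
  shows "M1 = M2"
proof (rule mat_eq_vec[OF M1 M2])
  fix x :: "complex vec" assume "x \<in> carrier_vec n"
  then obtain S c where "x = comb S c" using span by blast
  thus "M1 *\<^sub>v x = M2 *\<^sub>v x" using mat_comb[OF M1] mat_comb[OF M2] eq by simp
qed

end


lemma conj_vec:
  fixes g h B :: "complex mat"
  assumes g: "g \<in> carrier_mat n n" and h: "h \<in> carrier_mat n n" and B: "B \<in> carrier_mat n n"
  and hg: "h * g = 1\<^sub>m n" and e: "g * (s \<cdot>\<^sub>m B) * h = B" and s: "s \<noteq> 0"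
  shows "\<forall>y\<in>carrier_vec n. g *\<^sub>v (B *\<^sub>v y) = (1/s) \<cdot>\<^sub>v (B *\<^sub>v (g *\<^sub>v y))"
proof
  fix y :: "complex vec" assume y: "y \<in> carrier_vec n"
  have sB: "s \<cdot>\<^sub>m B \<in> carrier_mat n n" using B by simp
  have gsB: "g * (s \<cdot>\<^sub>m B) \<in> carrier_mat n n" using g sB by simp
  have "B * g = g * (s \<cdot>\<^sub>m B) * h * g" using e by simp
  also have "\<dots> = g * (s \<cdot>\<^sub>m B) * (h * g)" using assoc_mult_mat[OF gsB h g] .
  also have "\<dots> = g * (s \<cdot>\<^sub>m B)" using hg right_mult_one_mat[OF gsB] by simp
  finally have Bg: "B * g = g * (s \<cdot>\<^sub>m B)" .
  have "B *\<^sub>v (g *\<^sub>v y) = (B * g) *\<^sub>v y" using B g y by simp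
  also have "\<dots> = g *\<^sub>v ((s \<cdot>\<^sub>m B) *\<^sub>v y)" unfolding Bg using g sB y by simp
  also have "\<dots> = s \<cdot>\<^sub>v (g *\<^sub>v (B *\<^sub>v y))"
    using smult_mat_vec[OF B y] mult_mat_vec[OF g, of "B *\<^sub>v y" s] B y by simp
  finally have "(1/s) \<cdot>\<^sub>v (B *\<^sub>v (g *\<^sub>v y)) = (1/s) \<cdot>\<^sub>v (s \<cdot>\<^sub>v (g *\<^sub>v (B *\<^sub>v y)))" by simp
  also have "\<dots> = g *\<^sub>v (B *\<^sub>v y)" using s by (simp add: smult_smult_assoc)
  finally show "g *\<^sub>v (B *\<^sub>v y) = (1/s) \<cdot>\<^sub>v (B *\<^sub>v (g *\<^sub>v y))" by simp
qed

lemma subspace_sum: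
  assumes W: "W \<subseteq> carrier_vec n" "0\<^sub>v n \<in> W" "\<forall>x\<in>W. \<forall>y\<in>W. x + y \<in> W" "\<forall>a. \<forall>x\<in>W. a \<cdot>\<^sub>v x \<in> W"
  and fin: "finite A" and f: "\<forall>a\<in>A. f a \<in> W"
  shows "vec n (\<lambda>i. \<Sum>a\<in>A. c a * f a $ i) \<in> W"
  using fin f
proof (induction A rule: finite_induct)
  case empty
  have "vec n (\<lambda>i. \<Sum>a\<in>{}. c a * f a $ i) = 0\<^sub>v n" by (intro eq_vecI) auto
  thus ?case using W by simp
next
  case (insert x F)
  have fx: "f x \<in> carrier_vec n" using insert W by auto
  have "vec n (\<lambda>i. \<Sum>a\<in>insert x F. c a * f a $ i) = c x \<cdot>\<^sub>v f x + vec n (\<lambda>i. \<Sum>a\<in>F. c a * f a $ i)"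
    using insert fx by (intro eq_vecI) auto
  thus ?case using insert W by simp
qed

context qs begin

lemma conj_mat:
  assumes G: "G \<in> carrier_mat n n" and H: "H \<in> carrier_mat n n" and B: "B \<in> carrier_mat n n"
  and eG: "\<forall>m. G *\<^sub>v mv m = \<psi>1 m \<cdot>\<^sub>v mv m" and eH: "\<forall>m. H *\<^sub>v mv m = \<psi>2 m \<cdot>\<^sub>v mv m"
  and sh: "\<forall>m. B *\<^sub>v mv m = mv (\<sigma> m)" and sc: "\<forall>m. \<psi>1 (\<sigma> m) * (s * \<psi>2 m) = 1"
  shows "G * (s \<cdot>\<^sub>m B) * H = B"
proof (rule mat_eq_mv)
  have sB: "s \<cdot>\<^sub>m B \<in> carrier_mat n n" using B by simp
  show "G * (s \<cdot>\<^sub>m B) * H \<in> carrier_mat n n" using mult_carrier_mat[OF mult_carrier_mat[OF G sB] H] .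
  show "B \<in> carrier_mat n n" by fact
  fix m
  have Hm: "H *\<^sub>v mv m \<in> carrier_vec n" using H by simp
  have "(G * (s \<cdot>\<^sub>m B) * H) *\<^sub>v mv m = (G * (s \<cdot>\<^sub>m B)) *\<^sub>v (H *\<^sub>v mv m)"
    using assoc_mult_mat_vec[OF mult_carrier_mat[OF G sB] H mv_carrier] .
  also have "\<dots> = G *\<^sub>v ((s \<cdot>\<^sub>m B) *\<^sub>v (H *\<^sub>v mv m))"
    using assoc_mult_mat_vec[OF G sB Hm] .
  also have "(s \<cdot>\<^sub>m B) *\<^sub>v (H *\<^sub>v mv m) = s \<cdot>\<^sub>v (B *\<^sub>v (\<psi>2 m \<cdot>\<^sub>v mv m))"
    using smult_mat_vec[OF B Hm] eH by metis
  also have "\<dots> = s \<cdot>\<^sub>v (\<psi>2 m \<cdot>\<^sub>v mv (\<sigma> m))"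
    using mult_mat_vec[OF B mv_carrier] sh by metis
  also have "\<dots> = (s * \<psi>2 m) \<cdot>\<^sub>v mv (\<sigma> m)" by (simp add: smult_smult_assoc)
  also have "G *\<^sub>v ((s * \<psi>2 m) \<cdot>\<^sub>v mv (\<sigma> m)) = (s * \<psi>2 m) \<cdot>\<^sub>v (\<psi>1 (\<sigma> m) \<cdot>\<^sub>v mv (\<sigma> m))"
    using mult_mat_vec[OF G mv_carrier] eG by metis
  also have "\<dots> = (\<psi>1 (\<sigma> m) * (s * \<psi>2 m)) \<cdot>\<^sub>v mv (\<sigma> m)" by (simp add: smult_smult_assoc mult.commute)
  also have "\<dots> = B *\<^sub>v mv m"
  proof -
    have "\<psi>1 (\<sigma> m) * (s * \<psi>2 m) = 1" using sc by blast
    thus ?thesis using sh[rule_format, of m] by simp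
  qed
  finally show "(G * (s \<cdot>\<^sub>m B) * H) *\<^sub>v mv m = B *\<^sub>v mv m" .
qed

lemma inv_mat:
  assumes G: "G \<in> carrier_mat n n" and H: "H \<in> carrier_mat n n"
  and eG: "\<forall>m. G *\<^sub>v mv m = \<psi>1 m \<cdot>\<^sub>v mv m" and eH: "\<forall>m. H *\<^sub>v mv m = \<psi>2 m \<cdot>\<^sub>v mv m"
  and sc: "\<forall>m. \<psi>1 m * \<psi>2 m = 1"
  shows "G * H = 1\<^sub>m n"
proof (rule mat_eq_mv)
  show "G * H \<in> carrier_mat n n" using G H by simp
  fix m
  have "(G * H) *\<^sub>v mv m = G *\<^sub>v (H *\<^sub>v mv m)" using G H by simp
  also have "\<dots> = G *\<^sub>v (\<psi>2 m \<cdot>\<^sub>v mv m)" using eH by metis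
  also have "\<dots> = \<psi>2 m \<cdot>\<^sub>v (G *\<^sub>v mv m)" using mult_mat_vec[OF G mv_carrier] by blast
  also have "\<dots> = \<psi>2 m \<cdot>\<^sub>v (\<psi>1 m \<cdot>\<^sub>v mv m)" using eG by metis
  also have "\<dots> = (\<psi>1 m * \<psi>2 m) \<cdot>\<^sub>v mv m" by (simp add: smult_smult_assoc mult.commute)
  finally have "(G * H) *\<^sub>v mv m = (\<psi>1 m * \<psi>2 m) \<cdot>\<^sub>v mv m" .
  thus "(G * H) *\<^sub>v mv m = 1\<^sub>m n *\<^sub>v mv m" using sc by simp
qed simp

end


lemma A_mat_carrier: "A_mat r \<in> carrier_mat r r" unfolding A_mat_def by simp

lemma col_I_step:
  fixes B3 I :: "complex mat"
  assumes B3: "B3 \<in> carrier_mat n n" and I: "I \<in> carrier_mat n r"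
  and I3: "B3 * I = I * A_mat r" and a: "Suc a < r"
  shows "col I (Suc a) = B3 *\<^sub>v col I a"
proof -
  have "B3 *\<^sub>v col I a = col (B3 * I) a" using col_mult2[OF B3 I, of a] a by simp
  also have "\<dots> = col (I * A_mat r) a" using I3 by simp
  also have "\<dots> = I *\<^sub>v col (A_mat r) a" using col_mult2[OF I A_mat_carrier, of a] a by simp
  also have "col (A_mat r) a = unit_vec r (Suc a)"
    using a by (intro eq_vecI) (auto simp: A_mat_def)
  also have "I *\<^sub>v unit_vec r (Suc a) = col I (Suc a)"
    using I a by (intro eq_vecI) auto
  finally show ?thesis by simp
qed

lemma key:
  fixes B1 B2 B3 I J :: "complex mat"
  assumes Q: "in_Q0 r n (B1,B2,B3,I,J)" and T0f: "T0_fixed r n (B1,B2,B3,I,J)"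
  and t1: "t1 \<noteq> 0" and t2: "t2 \<noteq> 0" and t3: "t3 \<noteq> 0"
  shows "fixed_by r n t1 t2 t3 (B1,B2,B3,I,J)"
proof -
  from Q have B1: "B1 \<in> carrier_mat n n" and B2: "B2 \<in> carrier_mat n n" and B3: "B3 \<in> carrier_mat n n"
    and I: "I \<in> carrier_mat n r" and Jc: "J \<in> carrier_mat r n"
    and rel12: "B1 * B2 - B2 * B1 + I * J = 0\<^sub>m n n"
    and I3: "B3 * I = I * A_mat r" and c31: "B3 * B1 = B1 * B3" and c32: "B3 * B2 = B2 * B3"
    and cyc: "cyclic_cond r n (B1,B2,B3,I,J)" and J0: "J = 0\<^sub>m r n"
    unfolding in_Q0_def is_rep_def by auto
  have gl: "gl_act g h (torus_act r n s1 s2 s3 (B1,B2,B3,I,J)) =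
     (g * (s1 \<cdot>\<^sub>m B1) * h, g * (s2 \<cdot>\<^sub>m B2) * h, g * (s3 \<cdot>\<^sub>m B3) * h,
      g * mat n r (\<lambda>(i,a). s3 ^ a * I $$ (i,a)), mat r n (\<lambda>(a,j). s1 * s2 / s3 ^ a * J $$ (a,j)) * h)"
    for g h s1 s2 s3 unfolding gl_act_def torus_act_def by simp
  have cycc: "\<forall>W. is_subspace n W \<and> (\<forall>w\<in>W. B1 *\<^sub>v w \<in> W \<and> B2 *\<^sub>v w \<in> W \<and> B3 *\<^sub>v w \<in> W)
     \<and> (\<forall>u\<in>carrier_vec r. I *\<^sub>v u \<in> W) \<longrightarrow> W = carrier_vec n"
    using cyc unfolding cyclic_cond_def by simp
  show ?thesis
  proof (cases "n = 0")
    case True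
    show ?thesis unfolding fixed_by_def gl_equiv_def gl
      by (rule exI[of _ "1\<^sub>m n"], rule exI[of _ "1\<^sub>m n"]) (use True B1 B2 B3 I Jc in \<open>auto intro!: eq_matI\<close>)
  next
    case False
    have r0: "0 < r"
    proof (rule ccontr)
      assume "\<not> 0 < r" hence r: "r = 0" by simp
      have "is_subspace n {0\<^sub>v n}" unfolding is_subspace_def by auto
      moreover have "\<forall>w\<in>{0\<^sub>v n}. B1 *\<^sub>v w \<in> {0\<^sub>v n} \<and> B2 *\<^sub>v w \<in> {0\<^sub>v n} \<and> B3 *\<^sub>v w \<in> {0\<^sub>v n}"
        using mat_vec_zero[OF B1] mat_vec_zero[OF B2] mat_vec_zero[OF B3] by simp
      moreover have "\<forall>u\<in>carrier_vec r. I *\<^sub>v u \<in> {0\<^sub>v n}"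
        using I r by (auto intro!: eq_vecI simp: scalar_prod_def)
      ultimately have "is_subspace n {0\<^sub>v n} \<and> (\<forall>w\<in>{0\<^sub>v n}. B1 *\<^sub>v w \<in> {0\<^sub>v n} \<and> B2 *\<^sub>v w \<in> {0\<^sub>v n} \<and> B3 *\<^sub>v w \<in> {0\<^sub>v n})
     \<and> (\<forall>u\<in>carrier_vec r. I *\<^sub>v u \<in> {0\<^sub>v n})" by (intro conjI)
      hence "{0\<^sub>v n} = (carrier_vec n :: complex vec set)" using mp[OF spec[OF cycc, of "{0\<^sub>v n}"]] by fast
      hence eqW: "{0\<^sub>v n} = (carrier_vec n :: complex vec set)" .
      have "(unit_vec n 0 :: complex vec) \<in> carrier_vec n" by simp
      hence "(unit_vec n 0 :: complex vec) \<in> {0\<^sub>v n}" by (subst eqW)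
      hence "unit_vec n 0 = (0\<^sub>v n :: complex vec)" by simp
      hence "unit_vec n 0 $ 0 = (0\<^sub>v n :: complex vec) $ 0" by simp
      thus False using False by simp
    qed
    define v where "v = col I 0"
    have v: "v \<in> carrier_vec n" unfolding v_def using I r0 by simp
    have colI: "a < r \<Longrightarrow> col I a = ((\<lambda>y. B3 *\<^sub>v y) ^^ a) v" for a
    proof (induction a)
      case (Suc a)
      then show ?case using col_I_step[OF B3 I I3 Suc.prems] by simp
    qed (simp add: v_def)
    have c12: "B1 * B2 = B2 * B1"
    proof (rule eq_matI)
      fix i j assume "i < dim_row (B2 * B1)" "j < dim_col (B2 * B1)"
      hence ij: "i < n" "j < n" using B1 B2 by auto
      have "(B1 * B2 - B2 * B1 + I * J) $$ (i,j) = 0" using rel12 ij by simp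
      moreover have "(I * J) $$ (i,j) = 0" using ij I J0 by (simp add: scalar_prod_def)
      ultimately show "(B1 * B2) $$ (i,j) = (B2 * B1) $$ (i,j)" using ij B1 B2 I Jc by simp
    qed (use B1 B2 in auto)
    have T0: "\<exists>g\<in>carrier_mat n n.
      (\<forall>y\<in>carrier_vec n. g *\<^sub>v (B1 *\<^sub>v y) = (1/s1) \<cdot>\<^sub>v (B1 *\<^sub>v (g *\<^sub>v y))) \<and>
      (\<forall>y\<in>carrier_vec n. g *\<^sub>v (B2 *\<^sub>v y) = (1/s2) \<cdot>\<^sub>v (B2 *\<^sub>v (g *\<^sub>v y))) \<and>
      (\<forall>y\<in>carrier_vec n. g *\<^sub>v (B3 *\<^sub>v y) = (s1*s2) \<cdot>\<^sub>v (B3 *\<^sub>v (g *\<^sub>v y))) \<and> g *\<^sub>v v = v"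
      if s: "s1 \<noteq> 0" "s2 \<noteq> 0" for s1 s2
    proof -
      have "fixed_by r n s1 s2 (1 / (s1 * s2)) (B1,B2,B3,I,J)" using T0f s unfolding T0_fixed_def by blast
      then obtain g h where g: "g \<in> carrier_mat n n" and h: "h \<in> carrier_mat n n"
        and hg: "h * g = 1\<^sub>m n"
        and e1: "g * (s1 \<cdot>\<^sub>m B1) * h = B1" and e2: "g * (s2 \<cdot>\<^sub>m B2) * h = B2"
        and e3: "g * ((1 / (s1 * s2)) \<cdot>\<^sub>m B3) * h = B3"
        and eI: "g * mat n r (\<lambda>(i,a). (1 / (s1 * s2)) ^ a * I $$ (i,a)) = I"
        unfolding fixed_by_def gl_equiv_def gl by auto
      have "col (g * mat n r (\<lambda>(i,a). (1 / (s1 * s2)) ^ a * I $$ (i,a))) 0 = g *\<^sub>v col (mat n r (\<lambda>(i,a). (1 / (s1 * s2)) ^ a * I $$ (i,a))) 0"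
        using g r0 by (intro col_mult2) auto
      also have "col (mat n r (\<lambda>(i,a). (1 / (s1 * s2)) ^ a * I $$ (i,a))) 0 = v"
        unfolding v_def using I r0 by (intro eq_vecI) auto
      finally have gv: "g *\<^sub>v v = v" using eI unfolding v_def by simp
      have x3: "\<forall>y\<in>carrier_vec n. g *\<^sub>v (B3 *\<^sub>v y) = (1 / (1 / (s1 * s2))) \<cdot>\<^sub>v (B3 *\<^sub>v (g *\<^sub>v y))"
        by (rule conj_vec[OF g h B3 hg e3]) (use s in simp)
      have ss: "1 / (1 / (s1 * s2)) = s1 * s2" by simp
      show ?thesis
        by (intro bexI[of _ g] conjI, fact conj_vec[OF g h B1 hg e1 s(1)], fact conj_vec[OF g h B2 hg e2 s(2)],
            fact x3[unfolded ss], fact gv, fact g)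
    qed
    have cycW: "carrier_vec n \<subseteq> W"
      if W: "W \<subseteq> carrier_vec n" "0\<^sub>v n \<in> W" "\<forall>x\<in>W. \<forall>y\<in>W. x + y \<in> W" "\<forall>a. \<forall>x\<in>W. a \<cdot>\<^sub>v x \<in> W"
        "\<forall>x\<in>W. B1 *\<^sub>v x \<in> W \<and> B2 *\<^sub>v x \<in> W \<and> B3 *\<^sub>v x \<in> W" "v \<in> W" for W
    proof -
      have pw: "((\<lambda>y. B3 *\<^sub>v y) ^^ a) v \<in> W" for a
      proof (induction a)
        case 0 show ?case using W(6) by simp
      next
        case (Suc a) then show ?case using W(5) by simp
      qed
      have "\<forall>u\<in>carrier_vec r. I *\<^sub>v u \<in> W"
      proof
        fix u :: "complex vec" assume u: "u \<in> carrier_vec r"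
        have "I *\<^sub>v u = vec n (\<lambda>i. \<Sum>a\<in>{..<r}. u $ a * col I a $ i)"
          using I u by (intro eq_vecI) (auto simp: scalar_prod_def lessThan_atLeast0 mult.commute)
        also have "\<dots> \<in> W" using subspace_sum[OF W(1-4), of "{..<r}" "col I"] colI pw by simp
        finally show "I *\<^sub>v u \<in> W" .
      qed
      moreover have "is_subspace n W" unfolding is_subspace_def using W by blast
      ultimately have "W = carrier_vec n" using mp[OF spec[OF cycc, of W]] W(5) by fast
      thus ?thesis by simp
    qed
    have c13: "B1 * B3 = B3 * B1" using c31 by simp
    have c23: "B2 * B3 = B3 * B2" using c32 by simp
    interpret qs n B1 B2 B3 v by (rule qs.intro[OF B1 B2 B3 v c12 c13 c23 T0 cycW])
    define \<psi>1 where "\<psi>1 = (\<lambda>(a::nat,b::nat,c::nat). (1/t1)^a * (1/t2)^b * (1/t3)^c)"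
    define \<psi>2 where "\<psi>2 = (\<lambda>(a::nat,b::nat,c::nat). t1^a * t2^b * t3^c)"
    obtain G where G: "G \<in> carrier_mat n n" and eG: "\<forall>m. G *\<^sub>v mv m = \<psi>1 m \<cdot>\<^sub>v mv m"
      using exists_G by blast
    obtain H where H: "H \<in> carrier_mat n n" and eH: "\<forall>m. H *\<^sub>v mv m = \<psi>2 m \<cdot>\<^sub>v mv m"
      using exists_G by blast
    have GH: "G * H = 1\<^sub>m n"
      by (rule inv_mat[OF G H eG eH]) (auto simp: \<psi>1_def \<psi>2_def power_one_over field_simps t1 t2 t3)
    have HG: "H * G = 1\<^sub>m n"
      by (rule inv_mat[OF H G eH eG]) (auto simp: \<psi>1_def \<psi>2_def power_one_over field_simps t1 t2 t3)
    have g1: "G * (t1 \<cdot>\<^sub>m B1) * H = B1"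
      by (rule conj_mat[OF G H B1 eG eH, of "\<lambda>(a,b,c). (Suc a, b, c)"])
         (auto simp: mv_B1 \<psi>1_def \<psi>2_def power_one_over field_simps t1 t2 t3)
    have g2: "G * (t2 \<cdot>\<^sub>m B2) * H = B2"
      by (rule conj_mat[OF G H B2 eG eH, of "\<lambda>(a,b,c). (a, Suc b, c)"])
         (auto simp: mv_B2 \<psi>1_def \<psi>2_def power_one_over field_simps t1 t2 t3)
    have g3: "G * (t3 \<cdot>\<^sub>m B3) * H = B3"
      by (rule conj_mat[OF G H B3 eG eH, of "\<lambda>(a,b,c). (a, b, Suc c)"])
         (auto simp: mv_B3 \<psi>1_def \<psi>2_def power_one_over field_simps t1 t2 t3)
    have gI: "G * mat n r (\<lambda>(i,a). t3 ^ a * I $$ (i,a)) = I"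
    proof (rule eq_matI)
      fix i a assume "i < dim_row I" "a < dim_col I"
      hence ia: "i < n" "a < r" using I by auto
      have Ic: "mat n r (\<lambda>(i,a). t3 ^ a * I $$ (i,a)) \<in> carrier_mat n r" by simp
      have "(G * mat n r (\<lambda>(i,a). t3 ^ a * I $$ (i,a))) $$ (i,a) = col (G * mat n r (\<lambda>(i,a). t3 ^ a * I $$ (i,a))) a $ i"
        using ia G by simp
      also have "col (G * mat n r (\<lambda>(i,a). t3 ^ a * I $$ (i,a))) a = G *\<^sub>v col (mat n r (\<lambda>(i,a). t3 ^ a * I $$ (i,a))) a"
        using col_mult2[OF G Ic ia(2)] .
      also have "col (mat n r (\<lambda>(i,a). t3 ^ a * I $$ (i,a))) a = t3 ^ a \<cdot>\<^sub>v mv (0,0,a)"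
        unfolding mv_00c colI[OF ia(2), symmetric] using I ia by (intro eq_vecI) auto
      also have "G *\<^sub>v (t3 ^ a \<cdot>\<^sub>v mv (0,0,a)) = t3 ^ a \<cdot>\<^sub>v (\<psi>1 (0,0,a) \<cdot>\<^sub>v mv (0,0,a))"
        using mult_mat_vec[OF G mv_carrier] eG by metis
      also have "\<dots> = mv (0,0,a)" using t3 by (simp add: smult_smult_assoc \<psi>1_def power_one_over field_simps)
      also have "mv (0,0,a) $ i = I $$ (i,a)" unfolding mv_00c colI[OF ia(2), symmetric] using I ia by simp
      finally show "(G * mat n r (\<lambda>(i,a). t3 ^ a * I $$ (i,a))) $$ (i,a) = I $$ (i,a)" .
    qed (use I G in auto)
    have gJ: "mat r n (\<lambda>(a,j). t1 * t2 / t3 ^ a * J $$ (a,j)) * H = J"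
    proof -
      have "mat r n (\<lambda>(a,j). t1 * t2 / t3 ^ a * J $$ (a,j)) = 0\<^sub>m r n"
        unfolding J0 by (intro eq_matI) auto
      thus ?thesis using H J0 by simp
    qed
    show ?thesis unfolding fixed_by_def gl_equiv_def gl
      using G H GH HG g1 g2 g3 gI gJ by blast
  qed
qed

theorem lemma4p6:
  fixes r n :: nat and x :: rep_data
  assumes "in_Q0 r n x"
  shows "T0_fixed r n x \<longleftrightarrow> T_fixed r n x"
proof -
  obtain B1 B2 B3 I J where x: "x = (B1,B2,B3,I,J)" by (cases x) auto
  show ?thesis
  proof
    assume "T_fixed r n x"
    thus "T0_fixed r n x" unfolding T_fixed_def T0_fixed_def by simp
  next
    assume T0: "T0_fixed r n x"
    show "T_fixed r n x" unfolding T_fixed_def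
      using key[of r n B1 B2 B3 I J] assms T0 unfolding x by blast
  qed
qed


end
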